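(* (1) For every fixed integer $d\ge 3$ there is a constant $C_d$ such that $m^*(n,d)\le C_d(\log_2 n)^{\lfloor\log_2 d\rfloor}$ for all integers $n\ge 2$; that is, $m^*(n,d)=O\big(\log_2^{\lfloor \log_2 d\rfloor} n\big)$. (2) For every integer $n\ge 3$, $m^*(n,3)\le 2\lceil\log_2 n\rceil-1$.
   Context: For a binary matrix $M$ and a nonempty set $S$ of its columns, $S$ is a stopping set if the submatrix formed by $S$ has no row with exactly one $1$; $s(M)$ is the minimum size of a stopping set ($+\infty$ if none). $M$ is $d$-decodable if $s(M)\ge d+1$. $m^*(n,d)$ is the minimum $m$ such that an $m\times n$ $d$-decodable binary matrix exists. *)

theory Defs
  imports Complex_Main "HOL-Library.Extended_Nat"
begin

text \<open>An m x n binary matrix is represented as M :: nat \<Rightarrow> nat \<Rightarrow> bool,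
  where M i j (for i < m, j < n) is True iff the entry in row i, column j is 1.
  Entries outside the range are irrelevant.\<close>

definition stopping_set :: "nat \<Rightarrow> nat \<Rightarrow> (nat \<Rightarrow> nat \<Rightarrow> bool) \<Rightarrow> nat set \<Rightarrow> bool" where
  "stopping_set m n M S \<longleftrightarrow> S \<subseteq> {..<n} \<and> S \<noteq> {} \<and>
     (\<forall>i<m. card {j\<in>S. M i j} \<noteq> 1)"

definition stop_dist :: "nat \<Rightarrow> nat \<Rightarrow> (nat \<Rightarrow> nat \<Rightarrow> bool) \<Rightarrow> enat" where
  "stop_dist m n M = Inf {enat (card S) | S. stopping_set m n M S}"

definition decodable :: "nat \<Rightarrow> nat \<Rightarrow> nat \<Rightarrow> (nat \<Rightarrow> nat \<Rightarrow> bool) \<Rightarrow> bool" where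
  "decodable m n d M \<longleftrightarrow> stop_dist m n M \<ge> enat (d + 1)"

definition mstar :: "nat \<Rightarrow> nat \<Rightarrow> nat" where
  "mstar n d = (LEAST m. \<exists>M. decodable m n d M)"

end

theory Submission
  imports Defs
begin

definition sat :: "(nat \<times> bool) list \<Rightarrow> nat \<Rightarrow> bool" where
  "sat xs s = (\<forall>(b,v)\<in>set xs. bit s b = v)"

lemma bit_high: "(x::nat) < 2^L \<Longrightarrow> L \<le> b \<Longrightarrow> \<not> bit x b"
proof -
  assume a: "x < 2^L" "L \<le> b"
  have "(2::nat)^L \<le> 2^b" using a(2) by simp
  hence "x < 2^b" using a(1) by linarith
  hence "x div 2^b = 0" by (rule div_less)
  thus ?thesis by (simp add: bit_nat_def)
qed

lemma diff_bit:
  assumes "(x::nat) < 2^L" "y < 2^L" "x \<noteq> y"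
  shows "\<exists>b<L. bit x b \<noteq> bit y b"
proof -
  from assms(3) obtain b where "bit x b \<noteq> bit y b"
    using bit_eq_iff[of x y] by auto
  moreover have "b < L" using calculation bit_high[OF assms(1)] bit_high[OF assms(2)]
    by (meson not_le)
  ultimately show ?thesis by blast
qed

lemma decodableI:
  assumes "\<And>S. stopping_set m n M S \<Longrightarrow> d + 1 \<le> card S"
  shows "decodable m n d M"
  unfolding decodable_def stop_dist_def
  by (rule Inf_greatest) (auto dest: assms)

lemma key:
  "\<And>S. S \<subseteq> {..<2^L} \<Longrightarrow> S \<noteq> {} \<Longrightarrow> card S < 2^(Suc j) \<Longrightarrow>
     \<exists>xs. length xs \<le> j \<and> set xs \<subseteq> {..<L} \<times> UNIV \<and> card {s\<in>S. sat xs s} = 1"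
proof (induction j)
  case 0
  have "finite S" using 0(1) finite_subset by blast
  have "card S > 0" using \<open>finite S\<close> 0(2) by (simp add: card_gt_0_iff)
  hence "card S = 1" using 0(3) by simp
  thus ?case by (intro exI[of _ "[]"]) (simp add: sat_def)
next
  case (Suc j)
  have fin: "finite S" using Suc(2) finite_subset by blast
  show ?case
  proof (cases "card S = 1")
    case True
    thus ?thesis by (intro exI[of _ "[]"]) (simp add: sat_def)
  next
    case False
    have "card S > 0" using fin Suc(3) by (simp add: card_gt_0_iff)
    hence "\<not> card S \<le> Suc 0" using False by simp
    then obtain x y where xy: "x \<in> S" "y \<in> S" "x \<noteq> y" using card_le_Suc0_iff_eq[OF fin] by blast
    obtain b where b: "b < L" "bit x b \<noteq> bit y b"
      using diff_bit[of x L y] xy Suc(2) by auto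
    define P where "P v = {s\<in>S. bit s b = v}" for v
    have "card (P True) + card (P False) = card S"
    proof -
      have "P True \<union> P False = S" "P True \<inter> P False = {}" unfolding P_def by auto
      thus ?thesis using fin by (metis card_Un_disjoint finite_Un)
    qed
    hence "card (P True) < 2^(Suc j) \<or> card (P False) < 2^(Suc j)" using Suc(4) by (simp only: power_Suc) linarith
    then obtain v where v: "card (P v) < 2^(Suc j)" by blast
    have ne: "P v \<noteq> {}" unfolding P_def using xy b by (cases v; cases "bit x b"; auto)
    have sub: "P v \<subseteq> {..<2^L}" using Suc(2) unfolding P_def by auto
    obtain xs where xs: "length xs \<le> j" "set xs \<subseteq> {..<L} \<times> UNIV" "card {s\<in>P v. sat xs s} = 1"
      using Suc.IH[OF sub ne v] by blast
    have "{s\<in>S. sat ((b,v)#xs) s} = {s\<in>P v. sat xs s}" unfolding P_def sat_def by auto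
    thus ?thesis using xs b by (intro exI[of _ "(b,v)#xs"]) auto
  qed
qed

lemma construct:
  assumes nL: "n \<le> 2^L" and L0: "0 < L" and dk: "d < 2^(Suc k)"
  shows "mstar n d \<le> (2*L)^k"
proof -
  define T where "T = {..<L} \<times> (UNIV::bool set)"
  define R where "R = {xs. set xs \<subseteq> T \<and> length xs = k}"
  have finT: "finite T" unfolding T_def by simp
  have cT: "card T = 2 * L" unfolding T_def by (simp add: card_cartesian_product)
  have finR: "finite R" unfolding R_def using finT by (simp add: finite_lists_length_eq)
  have cR: "card R = (2*L)^k" unfolding R_def using card_lists_length_eq[OF finT] cT by simp
  obtain h where h: "bij_betw h {0..<card R} R" using ex_bij_betw_nat_finite[OF finR] by blast
  define M where "M i j = sat (h i) j" for i j
  have "decodable (card R) n d M"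
  proof (rule decodableI)
    fix S assume st: "stopping_set (card R) n M S"
    show "d + 1 \<le> card S"
    proof (rule ccontr)
      assume "\<not> d + 1 \<le> card S"
      hence cs: "card S < 2^(Suc k)" using dk by simp
      have Ssub: "S \<subseteq> {..<2^L}" using st nL unfolding stopping_set_def by auto
      have Sne: "S \<noteq> {}" using st unfolding stopping_set_def by auto
      obtain xs where xs: "length xs \<le> k" "set xs \<subseteq> {..<L} \<times> UNIV" "card {s\<in>S. sat xs s} = 1"
        using key[OF Ssub Sne cs] by blast
      then obtain s0 where s0: "{s\<in>S. sat xs s} = {s0}" by (meson card_1_singletonE)
      define ys where "ys = xs @ replicate (k - length xs) (0, bit s0 0)"
      have ysR: "ys \<in> R" unfolding R_def ys_def T_def using xs L0 by auto
      obtain i where i: "i < card R" "h i = ys" using h ysR unfolding bij_betw_def by (metis atLeastLessThan_iff imageE)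
      have "{j\<in>S. M i j} = {s0}"
      proof -
        have "sat ys s \<Longrightarrow> sat xs s" for s unfolding ys_def sat_def by auto
        moreover have "sat ys s0" using s0 unfolding ys_def sat_def by auto
        ultimately show ?thesis using s0 i(2) unfolding M_def by blast
      qed
      thus False using st i(1) unfolding stopping_set_def by auto
    qed
  qed
  thus ?thesis unfolding mstar_def cR[symmetric] using Least_le[of "\<lambda>m. \<exists>M. decodable m n d M" "card R"] by blast
qed

lemma construct3:
  assumes nL: "n \<le> 2^L" and L2: "2 \<le> L"
  shows "mstar n 3 \<le> 2*L - 1"
proof -
  define M where "M i j = (if i < L then bit j i else \<not> bit j (i - L))" for i j :: nat
  have "decodable (2*L - 1) n 3 M"
  proof (rule decodableI)
    fix S assume st: "stopping_set (2*L - 1) n M S"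
    have Ssub: "S \<subseteq> {..<2^L}" using st nL unfolding stopping_set_def by auto
    have Sne: "S \<noteq> {}" using st unfolding stopping_set_def by auto
    have fin: "finite S" using Ssub finite_subset by blast
    have rows: "\<And>i. i < 2*L - 1 \<Longrightarrow> card {j\<in>S. M i j} \<noteq> 1" using st unfolding stopping_set_def by auto
    show "3 + 1 \<le> card S"
    proof (rule ccontr)
      assume "\<not> 3 + 1 \<le> card S"
      hence c3: "card S \<le> 3" by simp
      show False
      proof (cases "\<exists>x\<in>S. \<exists>y\<in>S. \<exists>b<L-1. bit x b \<noteq> bit y b")
        case True
        then obtain x y b where xy: "x\<in>S" "y\<in>S" "b < L - 1" "bit x b \<noteq> bit y b" by blast
        define P where "P v = {s\<in>S. bit s b = v}" for v
        have cP: "card (P True) + card (P False) = card S"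
        proof -
          have "P True \<union> P False = S" "P True \<inter> P False = {}" unfolding P_def by auto
          thus ?thesis using fin by (metis card_Un_disjoint finite_Un)
        qed
        have ne: "P v \<noteq> {}" for v unfolding P_def using xy by (cases v; cases "bit x b"; auto)
        have fP: "finite (P v)" for v unfolding P_def using fin by auto
        have "card (P v) > 0" for v using ne fP by (simp add: card_gt_0_iff)
        hence "card (P True) > 0" "card (P False) > 0" by auto
        hence "card (P True) = 1 \<or> card (P False) = 1" using cP c3 by arith
        moreover have "{j\<in>S. M b j} = P True" unfolding M_def P_def using xy(3) by auto
        moreover have "{j\<in>S. M (L + b) j} = P False" unfolding M_def P_def using xy(3) by auto
        ultimately show False using rows[of b] rows[of "L+b"] xy(3) by auto
      next
        case False
        hence agree: "\<And>x y b. x\<in>S \<Longrightarrow> y\<in>S \<Longrightarrow> b < L - 1 \<Longrightarrow> bit x b = bit y b" by blast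
        show False
        proof (cases "card S \<le> Suc 0")
          case True
          have "card S > 0" using fin Sne by (simp add: card_gt_0_iff)
          hence "card S = 1" using True by simp
          then obtain x where Sx: "S = {x}" by (rule card_1_singletonE)
          show False
          proof (cases "bit x 0")
            case True
            hence "{j\<in>S. M 0 j} = {x}" using Sx L2 unfolding M_def by auto
            thus False using rows[of 0] L2 by auto
          next
            case False
            hence "{j\<in>S. M L j} = {x}" using Sx L2 unfolding M_def by auto
            moreover have "L < 2*L - 1" using L2 by linarith
            ultimately show False using rows[of L] by auto
          qed
        next
          case False
          then obtain x y where xy: "x \<in> S" "y \<in> S" "x \<noteq> y" using card_le_Suc0_iff_eq[OF fin] by blast
          obtain b where b: "b < L" "bit x b \<noteq> bit y b"
            using diff_bit[of x L y] xy Ssub by auto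
          have "\<not> b < L - 1" using agree[OF xy(1,2)] b by blast
          hence bL: "b = L - 1" using b by linarith
          define Q where "Q = {s\<in>S. bit s (L-1)}"
          have Qne: "Q \<noteq> {}" unfolding Q_def using xy b bL by (cases "bit x b"; auto)
          have "\<forall>a1\<in>Q. \<forall>a2\<in>Q. a1 = a2"
          proof (intro ballI)
            fix a1 a2 assume a: "a1 \<in> Q" "a2 \<in> Q"
            show "a1 = a2"
            proof (rule ccontr)
              assume "a1 \<noteq> a2"
              then obtain c where c: "c < L" "bit a1 c \<noteq> bit a2 c"
                using diff_bit[of a1 L a2] a Ssub unfolding Q_def by auto
              show False
              proof (cases "c = L - 1")
                case True thus False using a c unfolding Q_def by auto
              next
                case False
                hence "c < L - 1" using c by auto
                thus False using agree a c unfolding Q_def by auto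
              qed
            qed
          qed
          hence "card Q \<le> Suc 0" using fin unfolding Q_def by (subst card_le_Suc0_iff_eq) auto
          moreover have "card Q > 0" using Qne fin unfolding Q_def by (simp add: card_gt_0_iff)
          ultimately have "card Q = 1" by simp
          moreover have "{j\<in>S. M (L-1) j} = Q" unfolding M_def Q_def using L2 by auto
          moreover have "L - 1 < 2*L - 1" using L2 by linarith
          ultimately show False using rows[of "L-1"] by auto
        qed
      qed
    qed
  qed
  thus ?thesis unfolding mstar_def using Least_le[of "\<lambda>m. \<exists>M. decodable m n 3 M" "2*L-1"] by blast
qed

lemma pow_bound:
  assumes "(n::nat) \<ge> 2"
  shows "n \<le> 2 ^ nat \<lceil>log 2 (real n)\<rceil>" and "1 \<le> log 2 (real n)"
proof -
  show lg: "1 \<le> log 2 (real n)" using assms by simp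
  have "real n = 2 powr (log 2 (real n))" using assms by simp
  also have "\<dots> \<le> 2 powr (real (nat \<lceil>log 2 (real n)\<rceil>))"
  proof (rule powr_mono)
    have "real (nat \<lceil>log 2 (real n)\<rceil>) = of_int \<lceil>log 2 (real n)\<rceil>" using lg by simp
    thus "log 2 (real n) \<le> real (nat \<lceil>log 2 (real n)\<rceil>)" by linarith
  qed simp
  also have "\<dots> = real (2 ^ nat \<lceil>log 2 (real n)\<rceil>)" by (simp add: powr_realpow)
  finally show "n \<le> 2 ^ nat \<lceil>log 2 (real n)\<rceil>" by (simp only: of_nat_le_iff)
qed

theorem theorem5p2:
  shows "(\<forall>d::nat. d \<ge> 3 \<longrightarrow> (\<exists>C::real. \<forall>n::nat. n \<ge> 2 \<longrightarrow>
            real (mstar n d) \<le> C * (log 2 (real n)) ^ (nat \<lfloor>log 2 (real d)\<rfloor>)))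
       \<and> (\<forall>n::nat. n \<ge> 3 \<longrightarrow> mstar n 3 \<le> 2 * nat \<lceil>log 2 (real n)\<rceil> - 1)"
proof (intro conjI allI impI)
  fix d :: nat assume d3: "d \<ge> 3"
  define k where "k = nat \<lfloor>log 2 (real d)\<rfloor>"
  have lgd: "log 2 (real d) \<ge> 0" using d3 by simp
  have "log 2 (real d) < real k + 1" unfolding k_def using lgd by linarith
  hence "real d < 2 powr (real k + 1)" using d3 by (subst (asm) log_less_iff) auto
  also have "\<dots> = real (2 ^ Suc k)" by (simp add: powr_realpow[symmetric] powr_add)
  finally have dk: "d < 2 ^ Suc k" by (simp only: of_nat_less_iff)
  show "\<exists>C::real. \<forall>n::nat. n \<ge> 2 \<longrightarrow>
            real (mstar n d) \<le> C * (log 2 (real n)) ^ (nat \<lfloor>log 2 (real d)\<rfloor>)"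
  proof (intro exI[of _ "4^k"] allI impI)
    fix n :: nat assume n2: "n \<ge> 2"
    define L where "L = nat \<lceil>log 2 (real n)\<rceil>"
    have nL: "n \<le> 2^L" and lg: "1 \<le> log 2 (real n)" using pow_bound[OF n2] unfolding L_def by auto
    have L0: "0 < L" unfolding L_def using lg by linarith
    have "mstar n d \<le> (2*L)^k" by (rule construct[OF nL L0 dk])
    hence "real (mstar n d) \<le> real (2*L) ^ k" by (metis of_nat_le_iff of_nat_power)
    also have "\<dots> \<le> (4 * log 2 (real n)) ^ k"
    proof (rule power_mono)
      have "real L \<le> log 2 (real n) + 1" unfolding L_def using lg by linarith
      thus "real (2*L) \<le> 4 * log 2 (real n)" using lg by simp
    qed simp
    also have "\<dots> = 4^k * log 2 (real n) ^ k" by (simp add: power_mult_distrib)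
    finally show "real (mstar n d) \<le> 4^k * (log 2 (real n)) ^ (nat \<lfloor>log 2 (real d)\<rfloor>)"
      unfolding k_def .
  qed
next
  fix n :: nat assume n3: "n \<ge> 3"
  define L where "L = nat \<lceil>log 2 (real n)\<rceil>"
  have nL: "n \<le> 2^L" using pow_bound[of n] n3 unfolding L_def by auto
  have "log 2 (real n) > 1" using n3 by simp
  hence L2: "2 \<le> L" unfolding L_def by linarith
  show "mstar n 3 \<le> 2 * nat \<lceil>log 2 (real n)\<rceil> - 1"
    using construct3[OF nL L2] unfolding L_def .
qed

end
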